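(* Let $\kappa$ be a weakly compact cardinal and let $A\subseteq\kappa$ be a non-stationary set of regular cardinals which is unbounded in $\kappa$. Then $\kappa\notin\operatorname{spec}(A)$. Therefore, if $\kappa$ is weakly compact and $A\subseteq\kappa$ is an unbounded set of regular cardinals, then $\kappa\in\operatorname{spec}(A)$ if and only if $A$ is stationary in $\kappa$.
   Context: For a set $A$ of regular cardinals, $\prod A$ is the set of functions $f$ with domain $A$ and $f(a)\in a$, ordered by pointwise domination. $\operatorname{spec}(A)$ is the set of regular cardinals $\lambda$ with $(\prod A,<)\geq_T\lambda$ in the Tukey order; equivalently, regular $\lambda$ such that there exists $\mathcal{F}\subseteq\prod A$ of size $\lambda$ such that every $\lambda$-sized subset of $\mathcal{F}$ is unbounded in $(\prod A,<)$. *)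

theory Defs
  imports Main "HOL-Library.Equipollence" "HOL-Library.FuncSet"
begin

text \<open>Ordinals are modelled as elements of a well-ordered type 'o; the ordinal
  alpha is identified with its initial segment {..<alpha}, so "beta in alpha"
  means beta < alpha.\<close>

definition is_cardinal :: "'o::wellorder \<Rightarrow> bool" where
  "is_cardinal l \<longleftrightarrow> (\<forall>\<beta><l. \<not> ({..<\<beta>} \<approx> {..<l}))"

definition unbounded_in :: "'o::wellorder set \<Rightarrow> 'o \<Rightarrow> bool" where
  "unbounded_in X l \<longleftrightarrow> (\<forall>\<gamma><l. \<exists>x\<in>X. \<gamma> \<le> x)"

definition regular_cardinal :: "'o::wellorder \<Rightarrow> bool" where
  "regular_cardinal l \<longleftrightarrow> is_cardinal l \<and> infinite {..<l} \<and>
     (\<forall>X\<subseteq>{..<l}. unbounded_in X l \<longrightarrow> X \<approx> {..<l})"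

definition club :: "'o::wellorder set \<Rightarrow> 'o \<Rightarrow> bool" where
  "club C \<kappa> \<longleftrightarrow> C \<subseteq> {..<\<kappa>} \<and> unbounded_in C \<kappa> \<and>
     (\<forall>\<beta><\<kappa>. (\<exists>c\<in>C. c < \<beta>) \<and> (\<forall>\<gamma><\<beta>. \<exists>c\<in>C. \<gamma> < c \<and> c < \<beta>) \<longrightarrow> \<beta> \<in> C)"

definition stationary :: "'o::wellorder set \<Rightarrow> 'o \<Rightarrow> bool" where
  "stationary S \<kappa> \<longleftrightarrow> S \<subseteq> {..<\<kappa>} \<and> (\<forall>C. club C \<kappa> \<longrightarrow> S \<inter> C \<noteq> {})"

text \<open>Weakly compact: uncountable cardinal kappa with kappa \<rightarrow> (kappa)^2_2.\<close>
definition weakly_compact :: "'o::wellorder \<Rightarrow> bool" where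
  "weakly_compact \<kappa> \<longleftrightarrow> is_cardinal \<kappa> \<and> uncountable {..<\<kappa>} \<and>
     (\<forall>c :: 'o \<Rightarrow> 'o \<Rightarrow> bool. \<exists>H\<subseteq>{..<\<kappa>}. \<exists>i. H \<approx> {..<\<kappa>} \<and>
        (\<forall>x\<in>H. \<forall>y\<in>H. x < y \<longrightarrow> c x y = i))"

definition prodA :: "'o::wellorder set \<Rightarrow> ('o \<Rightarrow> 'o) set" where
  "prodA A = (\<Pi>\<^sub>E a\<in>A. {..<a})"

definition bounded_prod :: "'o::wellorder set \<Rightarrow> ('o \<Rightarrow> 'o) set \<Rightarrow> bool" where
  "bounded_prod A G \<longleftrightarrow> (\<exists>g\<in>prodA A. \<forall>f\<in>G. \<forall>a\<in>A. f a < g a)"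

definition in_spec :: "'o::wellorder set \<Rightarrow> 'o \<Rightarrow> bool" where
  "in_spec A l \<longleftrightarrow> regular_cardinal l \<and>
     (\<exists>F\<subseteq>prodA A. F \<approx> {..<l} \<and>
        (\<forall>G\<subseteq>F. G \<approx> {..<l} \<longrightarrow> \<not> bounded_prod A G))"

end

theory Submission
  imports Defs
begin


lemma card_small:
  assumes "is_cardinal k" "\<beta> < k" "X \<lesssim> {..<\<beta>}"
  shows "\<not> ({..<k} \<lesssim> X)"
proof
  assume "{..<k} \<lesssim> X"
  then have a: "{..<k} \<lesssim> {..<\<beta>}" using assms(3) lepoll_trans by blast
  have b: "{..<\<beta>} \<lesssim> {..<k}" using assms(2) by (intro subset_imp_lepoll) auto
  have "{..<\<beta>} \<approx> {..<k}" using lepoll_antisym[OF b a] .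
  then show False using assms(1,2) unfolding is_cardinal_def by blast
qed

lemma card_limit:
  assumes "is_cardinal k" "infinite {..<k}" "x < k"
  shows "\<exists>y. x < y \<and> y < k"
proof (rule ccontr)
  assume "\<not> ?thesis"
  then have eq: "{..<k} = insert x {..<x}" using assms(3) by (auto simp: not_less) (meson antisym_conv1 le_less_trans not_le)
  then have "infinite {..<x}" using assms(2) by auto
  then have "insert x {..<x} \<approx> {..<x}" by (rule infinite_insert_eqpoll)
  then have "{..<x} \<approx> {..<k}" using eq eqpoll_sym by metis
  then show False using assms(1,3) unfolding is_cardinal_def by blast
qed

lemma reg_card: "regular_cardinal k \<Longrightarrow> is_cardinal k"
  by (simp add: regular_cardinal_def)

lemma reg_inf: "regular_cardinal k \<Longrightarrow> infinite {..<k}"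
  by (simp add: regular_cardinal_def)

lemma reg_limit: "regular_cardinal k \<Longrightarrow> x < k \<Longrightarrow> \<exists>y. x < y \<and> y < k"
  using card_limit reg_card reg_inf by blast

lemma reg_bounded:
  assumes "regular_cardinal k" "X \<subseteq> {..<k}" "\<not> ({..<k} \<lesssim> X)"
  shows "\<exists>\<beta><k. \<forall>x\<in>X. x < \<beta>"
proof (cases "unbounded_in X k")
  case True
  then have "X \<approx> {..<k}" using assms unfolding regular_cardinal_def by blast
  then show ?thesis using assms(3) eqpoll_sym eqpoll_imp_lepoll by blast
next
  case False
  then show ?thesis unfolding unbounded_in_def by (auto simp: not_le)
qed

lemma small_bounded:
  assumes "regular_cardinal k" "\<beta> < k" "X \<subseteq> {..<k}" "X \<lesssim> {..<\<beta>}"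
  shows "\<exists>\<gamma><k. \<forall>x\<in>X. x < \<gamma>"
  using reg_bounded[OF assms(1,3)] card_small[OF reg_card[OF assms(1)] assms(2,4)] by blast

lemma big_unbounded:
  assumes "is_cardinal k" "{..<k} \<lesssim> X"
  shows "unbounded_in X k"
proof (rule ccontr)
  assume "\<not> unbounded_in X k"
  then obtain \<gamma> where g: "\<gamma> < k" "\<forall>x\<in>X. x < \<gamma>" unfolding unbounded_in_def by (auto simp: not_le)
  then have "X \<lesssim> {..<\<gamma>}" by (intro subset_imp_lepoll) auto
  then show False using card_small[OF assms(1) g(1)] assms(2) by blast
qed

lemma reg_unb_eqpoll: "regular_cardinal k \<Longrightarrow> X \<subseteq> {..<k} \<Longrightarrow> unbounded_in X k \<Longrightarrow> X \<approx> {..<k}"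
  unfolding regular_cardinal_def by blast


lemma wc_card: "weakly_compact k \<Longrightarrow> is_cardinal k"
  by (simp add: weakly_compact_def)

lemma wc_inf: "weakly_compact k \<Longrightarrow> infinite {..<k}"
  using countable_finite by (auto simp: weakly_compact_def)

lemma wc_regular:
  assumes wc: "weakly_compact k" shows "regular_cardinal k"
  unfolding regular_cardinal_def
proof (intro conjI allI impI)
  show "is_cardinal k" "infinite {..<k}" using wc_card wc_inf wc by auto
  fix X assume X: "X \<subseteq> {..<k}" "unbounded_in X k"
  obtain H i where H: "H \<subseteq> {..<k}" "H \<approx> {..<k}"
    "\<forall>x\<in>H. \<forall>y\<in>H. x < y \<longrightarrow> (\<exists>z\<in>X. x \<le> z \<and> z < y) = i"
    using wc unfolding weakly_compact_def
    apply (elim conjE)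
    apply (drule spec[where x="\<lambda>x y. \<exists>z\<in>X. x \<le> z \<and> z < y"])
    by blast
  show "X \<approx> {..<k}"
  proof (cases i)
    case True
    define m where "m h = (LEAST z. z \<in> X \<and> h \<le> z)" for h
    have m: "m h \<in> X \<and> h \<le> m h" if "h \<in> H" for h
    proof -
      have "\<exists>z. z \<in> X \<and> h \<le> z" using X(2) H(1) that unfolding unbounded_in_def by blast
      then show ?thesis unfolding m_def by (rule LeastI_ex)
    qed
    have lt: "m h < m h'" if hh: "h \<in> H" "h' \<in> H" "h < h'" for h h'
    proof -
      obtain z where z: "z \<in> X" "h \<le> z" "z < h'" using H(3) hh True by blast
      have "m h \<le> z" unfolding m_def using z by (intro Least_le) auto
      also have "z < h'" by fact
      also have "h' \<le> m h'" using m hh by blast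
      finally show ?thesis .
    qed
    have "inj_on m H"
    proof (rule inj_onI)
      fix h h' assume "h \<in> H" "h' \<in> H" "m h = m h'"
      then show "h = h'" using lt by (metis less_irrefl linorder_neq_iff)
    qed
    then have "H \<approx> m ` H" by (simp add: eqpoll_sym inj_on_image_eqpoll_self)
    moreover have "m ` H \<subseteq> X" using m by auto
    ultimately have "{..<k} \<lesssim> X"
      by (meson H(2) eqpoll_sym lepoll_trans1 lepoll_trans2 subset_imp_lepoll)
    moreover have "X \<lesssim> {..<k}" using X(1) by (rule subset_imp_lepoll)
    ultimately show ?thesis by (simp add: lepoll_antisym)
  next
    case False
    have "H \<noteq> {}" using H(2) wc_inf[OF wc] eqpoll_sym eqpoll_empty_iff_empty by fastforce
    then obtain h0 where h0: "h0 \<in> H" by blast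
    then obtain z where z: "z \<in> X" "h0 \<le> z" using X(2) H(1) unfolding unbounded_in_def by blast
    then have "z < k" using X(1) by auto
    then obtain y' where y': "z < y'" "y' < k" using card_limit wc_card wc_inf wc by blast
    have "H \<subseteq> {..<y'}"
    proof
      fix y assume y: "y \<in> H"
      show "y \<in> {..<y'}"
      proof (cases "h0 < y")
        case True
        then have "\<not> (z < y)" using H(3) h0 y False z by blast
        then show ?thesis using y' by auto
      next
        case False
        then show ?thesis using z y' by auto
      qed
    qed
    then have "H \<lesssim> {..<y'}" by (rule subset_imp_lepoll)
    moreover have "{..<k} \<lesssim> H" using H(2) eqpoll_imp_lepoll eqpoll_sym by blast
    ultimately show ?thesis using card_small[OF wc_card[OF wc] y'(2)] by blast
  qed
qed


lemma count_bounded: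
  assumes "regular_cardinal k" "uncountable {..<k}" "X \<subseteq> {..<k}" "countable X"
  shows "\<exists>\<beta><k. \<forall>x\<in>X. x < \<beta>"
  using reg_bounded[OF assms(1,3)] countable_lepoll assms(2,4) by blast

lemma closure_club:
  assumes reg: "regular_cardinal k" and unc: "uncountable {..<k}"
    and I: "I \<subseteq> {..<k}" "unbounded_in I k"
  shows "club {\<beta>. \<beta> < k \<and> (\<exists>\<alpha>\<in>I. \<alpha> < \<beta>) \<and> (\<forall>\<gamma><\<beta>. \<exists>\<alpha>\<in>I. \<gamma> < \<alpha> \<and> \<alpha> < \<beta>)} k"
    (is "club ?D k")
  unfolding club_def
proof (intro conjI allI impI)
  show "?D \<subseteq> {..<k}" by auto
next
  fix \<beta> assume b: "\<beta> < k" "(\<exists>c\<in>?D. c < \<beta>) \<and> (\<forall>\<gamma><\<beta>. \<exists>c\<in>?D. \<gamma> < c \<and> c < \<beta>)"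
  show "\<beta> \<in> ?D"
  proof -
    have "\<exists>\<alpha>\<in>I. \<alpha> < \<beta>"
    proof -
      obtain c where "c \<in> ?D" "c < \<beta>" using b(2) by blast
      then obtain \<alpha> where "\<alpha> \<in> I" "\<alpha> < c" by blast
      then show ?thesis using \<open>c < \<beta>\<close> by (meson order.strict_trans)
    qed
    moreover have "\<forall>\<gamma><\<beta>. \<exists>\<alpha>\<in>I. \<gamma> < \<alpha> \<and> \<alpha> < \<beta>"
    proof (intro allI impI)
      fix \<gamma> assume "\<gamma> < \<beta>"
      then obtain c where c: "c \<in> ?D" "\<gamma> < c" "c < \<beta>" using b(2) by blast
      then obtain \<alpha> where "\<alpha> \<in> I" "\<gamma> < \<alpha>" "\<alpha> < c" by blast
      then show "\<exists>\<alpha>\<in>I. \<gamma> < \<alpha> \<and> \<alpha> < \<beta>" using c(3) by (meson order.strict_trans)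
    qed
    ultimately show ?thesis using b(1) by blast
  qed
next
  show "unbounded_in ?D k"
    unfolding unbounded_in_def
  proof (intro allI impI)
    fix \<gamma> assume g: "\<gamma> < k"
    have "\<forall>x. \<exists>y. x < k \<longrightarrow> y \<in> I \<and> x < y"
    proof
      fix x show "\<exists>y. x < k \<longrightarrow> y \<in> I \<and> x < y"
      proof (cases "x < k")
        case True
        then obtain y' where "x < y'" "y' < k" using reg_limit reg by blast
        then obtain y where "y \<in> I" "y' \<le> y" using I(2) unfolding unbounded_in_def by blast
        then show ?thesis using \<open>x < y'\<close> by (meson order_less_le_trans)
      qed auto
    qed
    then obtain nxt where nxt0: "\<forall>x. x < k \<longrightarrow> nxt x \<in> I \<and> x < nxt x" by (rule choice[THEN exE]) blast
    have nxt: "\<And>x. x < k \<Longrightarrow> nxt x \<in> I \<and> x < nxt x" using nxt0 by blast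
    define s where "s n = (nxt ^^ Suc n) \<gamma>" for n
    have sI: "s n \<in> I" for n
    proof (induction n)
      case 0 then show ?case using nxt g by (simp add: s_def)
    next
      case (Suc n)
      then have "s n < k" using I(1) by auto
      then show ?case using nxt by (simp add: s_def)
    qed
    have sS: "s n < s (Suc n)" for n
      using nxt[of "s n"] sI[of n] I(1) by (auto simp: s_def)
    have s0: "\<gamma> < s 0" using nxt[OF g] unfolding s_def by simp
    have "range s \<subseteq> {..<k}" using sI I(1) by blast
    moreover have "countable (range s)" by simp
    ultimately have "\<exists>\<delta><k. \<forall>x\<in>range s. x < \<delta>" by (rule count_bounded[OF reg unc])
    then obtain \<delta> where d: "\<delta> < k" "\<forall>x\<in>range s. x < \<delta>" by blast
    define \<beta> where "\<beta> = (LEAST \<delta>. \<forall>n. s n < \<delta>)"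
    have dd: "\<forall>n. s n < \<delta>" using d(2) by blast
    have bl: "\<forall>n. s n < \<beta>" unfolding \<beta>_def using LeastI[of "\<lambda>\<delta>. \<forall>n. s n < \<delta>", OF dd] .
    have "\<beta> \<le> \<delta>" unfolding \<beta>_def using Least_le[of "\<lambda>\<delta>. \<forall>n. s n < \<delta>", OF dd] .
    then have bk: "\<beta> < k" using d(1) by auto
    have cof: "\<forall>\<gamma>'<\<beta>. \<exists>\<alpha>\<in>I. \<gamma>' < \<alpha> \<and> \<alpha> < \<beta>"
    proof (intro allI impI)
      fix \<gamma>' assume "\<gamma>' < \<beta>"
      then have "\<not> (\<forall>n. s n < \<gamma>')" unfolding \<beta>_def using not_less_Least by blast
      then obtain n where "\<gamma>' \<le> s n" by (auto simp: not_less)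
      then have "\<gamma>' < s (Suc n)" using sS by (meson order_le_less_trans)
      then show "\<exists>\<alpha>\<in>I. \<gamma>' < \<alpha> \<and> \<alpha> < \<beta>" using sI bl by blast
    qed
    have "\<beta> \<in> ?D" using bk cof sI bl by blast
    moreover have "\<gamma> \<le> \<beta>" using s0 bl by (meson less_imp_le order.strict_trans)
    ultimately show "\<exists>x\<in>?D. \<gamma> \<le> x" by blast
  qed
qed


lemma stat_spec:
  assumes reg: "regular_cardinal k" and unc: "uncountable {..<k}"
    and A: "A \<subseteq> {..<k}" and Areg: "\<forall>a\<in>A. regular_cardinal a"
    and unb: "unbounded_in A k" and st: "stationary A k"
  shows "in_spec A k"
proof -
  define bot0 where "bot0 = (LEAST x::'a. True)"
  define f where "f \<alpha> = restrict (\<lambda>a. if \<alpha> < a then \<alpha> else bot0) A" for \<alpha>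
  have bot: "bot0 < a" if "a \<in> A" for a
  proof -
    have "{..<a} \<noteq> {}" using reg_inf Areg that by fastforce
    then obtain x where "x < a" by blast
    moreover have "bot0 \<le> x" unfolding bot0_def by (rule Least_le) simp
    ultimately show ?thesis by simp
  qed
  have fP: "f \<alpha> \<in> prodA A" for \<alpha>
    unfolding prodA_def f_def using bot by (auto simp: PiE_iff)
  have fa: "f \<alpha> a = \<alpha>" if "a \<in> A" "\<alpha> < a" for \<alpha> a
    using that by (simp add: f_def)
  have inj: "inj_on f {..<k}"
  proof -
    have ne: "f \<alpha> \<noteq> f \<beta>" if ab: "\<alpha> < \<beta>" "\<beta> < k" for \<alpha> \<beta>
    proof -
      obtain y where y: "\<beta> < y" "y < k" using reg_limit[OF reg ab(2)] by blast
      then obtain a where a: "a \<in> A" "y \<le> a" using unb unfolding unbounded_in_def by blast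
      have ba: "\<beta> < a" using less_le_trans[OF y(1) a(2)] .
      have "\<alpha> < a" using less_trans[OF ab(1) ba] .
      then have "f \<alpha> a = \<alpha>" "f \<beta> a = \<beta>" using fa[OF a(1)] ba by blast+
      then show ?thesis using ab(1) by (metis less_irrefl)
    qed
    show ?thesis
    proof (rule inj_onI)
      fix x y assume "x \<in> {..<k}" "y \<in> {..<k}" "f x = f y"
      then show "x = y"
      proof (cases rule: linorder_cases[of x y])
        case less then show ?thesis using ne[of x y] \<open>y \<in> {..<k}\<close> \<open>f x = f y\<close> by simp
      next
        case greater then show ?thesis using ne[of y x] \<open>x \<in> {..<k}\<close> \<open>f x = f y\<close> by simp
      qed
    qed
  qed
  define F where "F = f ` {..<k}"
  have FP: "F \<subseteq> prodA A" unfolding F_def using fP by blast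
  have Fk: "F \<approx> {..<k}" unfolding F_def using inj by (rule inj_on_image_eqpoll_self)
  have nb: "\<not> bounded_prod A G" if G: "G \<subseteq> F" "G \<approx> {..<k}" for G
  proof
    assume "bounded_prod A G"
    then obtain g where g: "g \<in> prodA A" "\<forall>h\<in>G. \<forall>a\<in>A. h a < g a" unfolding bounded_prod_def by blast
    define I where "I = {\<alpha>\<in>{..<k}. f \<alpha> \<in> G}"
    have GI: "G = f ` I" using G(1) unfolding I_def F_def by auto
    have "inj_on f I" using inj I_def by (metis (no_types, lifting) inj_on_subset mem_Collect_eq subsetI)
    then have "I \<approx> G" using GI by (simp add: eqpoll_sym inj_on_image_eqpoll_self)
    then have "{..<k} \<lesssim> I" using G(2) by (meson eqpoll_sym eqpoll_trans eqpoll_imp_lepoll)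
    then have Iu: "unbounded_in I k" by (rule big_unbounded[OF reg_card[OF reg]])
    have I0: "I \<subseteq> {..<k}" unfolding I_def by auto
    note D = closure_club[OF reg unc I0 Iu]
    then obtain a where a: "a \<in> A" "a < k" "\<forall>\<gamma><a. \<exists>\<alpha>\<in>I. \<gamma> < \<alpha> \<and> \<alpha> < a"
      using st unfolding stationary_def by blast
    have "g a < a" using g(1) a(1) unfolding prodA_def by (auto simp: PiE_iff)
    then obtain \<alpha> where al: "\<alpha> \<in> I" "g a < \<alpha>" "\<alpha> < a" using a(3) by blast
    then have "f \<alpha> \<in> G" unfolding I_def by blast
    then have "f \<alpha> a < g a" using g(2) a(1) by blast
    then show False using fa[OF a(1) al(3)] al(2) by simp
  qed
  show ?thesis unfolding in_spec_def using reg FP Fk nb by blast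
qed


definition lexless :: "'o::wellorder set \<Rightarrow> ('o \<Rightarrow> 'o) \<Rightarrow> ('o \<Rightarrow> 'o) \<Rightarrow> bool" where
  "lexless A f g \<longleftrightarrow> (\<exists>d\<in>A. f d < g d \<and> (\<forall>e\<in>A. e < d \<longrightarrow> f e = g e))"

lemma lexless_at:
  assumes "d \<in> A" "f d \<noteq> g d" "\<forall>e\<in>A. e < d \<longrightarrow> f e = g e"
  shows "lexless A f g \<longleftrightarrow> f d < g d"
proof
  assume "lexless A f g"
  then obtain d' where d': "d' \<in> A" "f d' < g d'" "\<forall>e\<in>A. e < d' \<longrightarrow> f e = g e"
    unfolding lexless_def by blast
  show "f d < g d"
  proof (cases rule: linorder_cases[of d d'])
    case less then show ?thesis using d'(3) assms(1,2) by blast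
  next
    case equal then show ?thesis using d'(2) by simp
  next
    case greater then show ?thesis using assms(3) d'(1,2) by (metis less_irrefl)
  qed
next
  assume "f d < g d" then show "lexless A f g" unfolding lexless_def using assms by blast
qed

lemma prodA_lt: "f \<in> prodA A \<Longrightarrow> a \<in> A \<Longrightarrow> f a < a"
  unfolding prodA_def by (auto simp: PiE_iff)

lemma nonstat_nospec:
  fixes k :: "'o::wellorder"
  assumes wc: "weakly_compact k" and A: "A \<subseteq> {..<k}" and Areg: "\<forall>a\<in>A. regular_cardinal a"
    and ns: "\<not> stationary A k"
  shows "\<not> in_spec A k"
proof
  assume sp: "in_spec A k"
  have reg: "regular_cardinal k" using wc by (rule wc_regular)
  obtain C where C: "club C k" "A \<inter> C = {}" using ns A unfolding stationary_def by blast
  obtain F where F: "F \<subseteq> prodA A" "F \<approx> {..<k}"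
    and nb: "\<forall>G\<subseteq>F. G \<approx> {..<k} \<longrightarrow> \<not> bounded_prod A G"
    using sp unfolding in_spec_def by blast
  obtain \<phi> where phi: "bij_betw \<phi> {..<k} F" using F(2) eqpoll_sym unfolding eqpoll_def by blast
  have phiP: "\<phi> i d < d" if "i < k" "d \<in> A" for i d
  proof -
    have "\<phi> i \<in> F" using phi that(1) bij_betwE by blast
    then show ?thesis using F(1) prodA_lt that(2) by blast
  qed
  obtain H col where H: "H \<subseteq> {..<k}" "H \<approx> {..<k}"
    and hom: "\<forall>x\<in>H. \<forall>y\<in>H. x < y \<longrightarrow> lexless A (\<phi> x) (\<phi> y) = col"
    using wc unfolding weakly_compact_def
    apply (elim conjE)
    apply (drule spec[where x="\<lambda>x y. lexless A (\<phi> x) (\<phi> y)"])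
    by blast
  have Hu: "unbounded_in H k"
    using H(2) eqpoll_sym eqpoll_imp_lepoll big_unbounded reg_card[OF reg] by blast
  have Hk: "i \<in> H \<Longrightarrow> i < k" for i using H(1) by blast
  define le' where "le' x y = (if col then x \<le> y else y \<le> x)" for x y :: 'o
  have stab: "d \<in> A \<Longrightarrow> \<exists>i0<k. \<exists>v. \<forall>i\<in>H. i0 \<le> i \<longrightarrow> \<phi> i d = v" for d
  proof (induction d rule: less_induct)
    case (less d)
    have dk: "d < k" using less.prems A by blast
    have "\<forall>e\<in>A \<inter> {..<d}. \<exists>i0. i0 < k \<and> (\<exists>v. \<forall>i\<in>H. i0 \<le> i \<longrightarrow> \<phi> i e = v)"
      using less.IH by blast
    then obtain I0 where I0: "\<forall>e\<in>A \<inter> {..<d}. I0 e < k \<and> (\<exists>v. \<forall>i\<in>H. I0 e \<le> i \<longrightarrow> \<phi> i e = v)"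
      by (rule bchoice[THEN exE]) blast
    have "I0 ` (A \<inter> {..<d}) \<subseteq> {..<k}" using I0 by blast
    moreover have "I0 ` (A \<inter> {..<d}) \<lesssim> {..<d}"
      by (meson image_lepoll inf_le2 lepoll_trans subset_imp_lepoll)
    ultimately have "\<exists>\<gamma><k. \<forall>x\<in>I0 ` (A \<inter> {..<d}). x < \<gamma>" by (rule small_bounded[OF reg dk])
    then obtain istar where ist: "istar < k" "\<forall>e\<in>A \<inter> {..<d}. I0 e < istar" by blast
    have agree: "\<phi> i e = \<phi> j e" if hy: "i \<in> H" "j \<in> H" "istar \<le> i" "istar \<le> j" "e \<in> A" "e < d" for i j e
    proof -
      obtain v where v: "\<forall>i\<in>H. I0 e \<le> i \<longrightarrow> \<phi> i e = v" using I0 hy(5,6) by blast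
      have "I0 e < istar" using ist hy(5,6) by blast
      then show ?thesis using v hy(1-4) by (metis order.strict_implies_order order.trans)
    qed
    have mono: "le' (\<phi> i d) (\<phi> j d)" if ij: "i \<in> H" "j \<in> H" "istar \<le> i" "i \<le> j" for i j
    proof (cases "\<phi> i d = \<phi> j d")
      case True then show ?thesis unfolding le'_def by simp
    next
      case False
      then have "i < j" using ij(4) by (metis order.not_eq_order_implies_strict)
      then have c: "lexless A (\<phi> i) (\<phi> j) = col" using hom ij(1,2) by blast
      have "\<forall>e\<in>A. e < d \<longrightarrow> \<phi> i e = \<phi> j e"
        using agree ij by (meson order.trans)
      then have "lexless A (\<phi> i) (\<phi> j) \<longleftrightarrow> \<phi> i d < \<phi> j d"
        using lexless_at[of d A "\<phi> i" "\<phi> j", OF less.prems False] by blast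
      then show ?thesis unfolding le'_def using c False by auto
    qed
    define P where "P v = {i\<in>H. istar \<le> i \<and> \<phi> i d = v}" for v
    have "\<exists>v<d. unbounded_in (P v) k"
    proof (rule ccontr)
      assume "\<not> ?thesis"
      then have "\<forall>v. \<exists>b. v < d \<longrightarrow> b < k \<and> (\<forall>x\<in>P v. x < b)"
        unfolding unbounded_in_def by (auto simp: not_le)
      then obtain bf where bf: "\<forall>v. v < d \<longrightarrow> bf v < k \<and> (\<forall>x\<in>P v. x < bf v)"
        by (rule choice[THEN exE]) blast
      have "bf ` {..<d} \<subseteq> {..<k}" using bf by blast
      moreover have "bf ` {..<d} \<lesssim> {..<d}" by (rule image_lepoll)
      ultimately have "\<exists>\<gamma><k. \<forall>x\<in>bf ` {..<d}. x < \<gamma>" by (rule small_bounded[OF reg dk])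
      then obtain B where B: "B < k" "\<forall>v<d. bf v < B" by blast
      have "max istar B < k" using B(1) ist(1) by simp
      then obtain i where i: "i \<in> H" "max istar B \<le> i" using Hu unfolding unbounded_in_def by blast
      have vd: "\<phi> i d < d" using phiP Hk i(1) less.prems by blast
      have "i \<in> P (\<phi> i d)" unfolding P_def using i by simp
      then have "i < B" using bf vd B(2) by (meson order.strict_trans)
      moreover have "B \<le> i" using i(2) by simp
      ultimately show False using leD by blast
    qed
    then obtain v where v: "v < d" "unbounded_in (P v) k" by blast
    then obtain p where p: "p \<in> P v" "istar \<le> p" using ist(1) unfolding unbounded_in_def by blast
    have pk: "p < k" using p(1) Hk unfolding P_def by blast
    have "\<forall>i\<in>H. p \<le> i \<longrightarrow> \<phi> i d = v"
    proof (intro ballI impI)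
      fix i assume i: "i \<in> H" "p \<le> i"
      have pH: "p \<in> H" "\<phi> p d = v" using p(1) unfolding P_def by auto
      have m1: "le' v (\<phi> i d)" using mono[OF pH(1) i(1) p(2) i(2)] pH(2) by simp
      obtain p' where p': "p' \<in> P v" "i \<le> p'" using v(2) Hk[OF i(1)] unfolding unbounded_in_def by blast
      have p'H: "p' \<in> H" "\<phi> p' d = v" using p'(1) unfolding P_def by auto
      have "istar \<le> i" using p(2) i(2) by simp
      then have m2: "le' (\<phi> i d) v" using mono[OF i(1) p'H(1) _ p'(2)] p'H(2) by simp
      show "\<phi> i d = v" using m1 m2 unfolding le'_def by (auto split: if_splits)
    qed
    then show ?case using pk by blast
  qed
  have "\<forall>d\<in>A. \<exists>i0. i0 < k \<and> (\<exists>v. \<forall>i\<in>H. i0 \<le> i \<longrightarrow> \<phi> i d = v)" using stab by blast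
  then obtain I where I1: "\<forall>d\<in>A. I d < k \<and> (\<exists>v. \<forall>i\<in>H. I d \<le> i \<longrightarrow> \<phi> i d = v)"
    by (rule bchoice[THEN exE]) blast
  then have "\<forall>d\<in>A. \<exists>v. \<forall>i\<in>H. I d \<le> i \<longrightarrow> \<phi> i d = v" by blast
  then obtain V where V: "\<forall>d\<in>A. \<forall>i\<in>H. I d \<le> i \<longrightarrow> \<phi> i d = V d"
    by (rule bchoice[THEN exE]) blast
  have Ik: "d \<in> A \<Longrightarrow> I d < k" for d using I1 by blast
  have Vd: "V d < d" if dA: "d \<in> A" for d
  proof -
    obtain i where i: "i \<in> H" "I d \<le> i" using Hu Ik[OF dA] unfolding unbounded_in_def by blast
    then have "\<phi> i d = V d" using V dA by blast
    then show ?thesis using phiP[OF Hk[OF i(1)] dA] by simp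
  qed
  have Ck: "C \<subseteq> {..<k}" and Cu: "unbounded_in C k" using C(1) unfolding club_def by auto
  have "\<forall>c\<in>C. \<exists>j. j \<in> H \<and> c \<le> j \<and> (\<forall>d\<in>A. d < c \<longrightarrow> I d \<le> j)"
  proof
    fix c assume cC: "c \<in> C"
    then have ck: "c < k" using Ck by blast
    have "I ` (A \<inter> {..<c}) \<subseteq> {..<k}" using Ik by blast
    moreover have "I ` (A \<inter> {..<c}) \<lesssim> {..<c}"
      by (meson image_lepoll inf_le2 lepoll_trans subset_imp_lepoll)
    ultimately have "\<exists>\<gamma><k. \<forall>x\<in>I ` (A \<inter> {..<c}). x < \<gamma>" by (rule small_bounded[OF reg ck])
    then obtain B1 where B1: "B1 < k" "\<forall>d\<in>A \<inter> {..<c}. I d < B1" by blast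
    have "max c B1 < k" using B1(1) ck by simp
    then obtain j where j: "j \<in> H" "max c B1 \<le> j" using Hu unfolding unbounded_in_def by blast
    have "\<forall>d\<in>A. d < c \<longrightarrow> I d \<le> j"
    proof (intro ballI impI)
      fix d assume "d \<in> A" "d < c"
      then have "I d < B1" using B1(2) by blast
      moreover have "B1 \<le> j" using j(2) by simp
      ultimately show "I d \<le> j" by simp
    qed
    moreover have "c \<le> j" using j(2) by simp
    ultimately show "\<exists>j. j \<in> H \<and> c \<le> j \<and> (\<forall>d\<in>A. d < c \<longrightarrow> I d \<le> j)" using j(1) by blast
  qed
  then obtain jf where jf: "\<forall>c\<in>C. jf c \<in> H \<and> c \<le> jf c \<and> (\<forall>d\<in>A. d < c \<longrightarrow> I d \<le> jf c)"
    by (rule bchoice[THEN exE]) blast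
  define J where "J = jf ` C"
  have JH: "J \<subseteq> H" using jf J_def by blast
  have Ju: "unbounded_in J k"
    unfolding unbounded_in_def
  proof (intro allI impI)
    fix \<gamma> assume "\<gamma> < k"
    then obtain c where c: "c \<in> C" "\<gamma> \<le> c" using Cu unfolding unbounded_in_def by blast
    then have "\<gamma> \<le> jf c" using jf by (meson order.trans)
    then show "\<exists>x\<in>J. \<gamma> \<le> x" using c(1) J_def by blast
  qed
  have Jk: "J \<approx> {..<k}" using reg_unb_eqpoll[OF reg _ Ju] JH H(1) by blast
  define G where "G = \<phi> ` J"
  have GF: "G \<subseteq> F" using phi JH H(1) unfolding G_def bij_betw_def by blast
  have "inj_on \<phi> J" using phi JH H(1) unfolding bij_betw_def by (meson inj_on_subset order.trans)
  then have "G \<approx> J" unfolding G_def by (rule inj_on_image_eqpoll_self)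
  then have Gk: "G \<approx> {..<k}" using Jk by (rule eqpoll_trans)
  have bnd: "\<exists>y<d. \<forall>j\<in>J. \<phi> j d < y" if dA: "d \<in> A" for d
  proof -
    have dreg: "regular_cardinal d" using Areg dA by blast
    have dC: "d \<notin> C" using C(2) dA by blast
    have dk: "d < k" using A dA by blast
    have "\<exists>\<gamma>d<d. \<forall>c\<in>C. c < d \<longrightarrow> c < \<gamma>d"
    proof (rule ccontr)
      assume "\<not> ?thesis"
      then have cof: "\<forall>\<gamma><d. \<exists>c\<in>C. \<gamma> \<le> c \<and> c < d" by (meson not_less)
      have "{..<d} \<noteq> {}" using reg_inf[OF dreg] by fastforce
      then obtain x where "x < d" by blast
      then have ex: "\<exists>c\<in>C. c < d" using cof by blast
      have "\<forall>\<gamma><d. \<exists>c\<in>C. \<gamma> < c \<and> c < d"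
      proof (intro allI impI)
        fix \<gamma> assume "\<gamma> < d"
        then obtain y where y: "\<gamma> < y" "y < d" using reg_limit[OF dreg] by blast
        then obtain c where "c \<in> C" "y \<le> c" "c < d" using cof by blast
        then show "\<exists>c\<in>C. \<gamma> < c \<and> c < d" using y(1) by (meson order_less_le_trans)
      qed
      then have "d \<in> C" using C(1) dk ex unfolding club_def by blast
      then show False using dC by blast
    qed
    then obtain \<gamma>d where gd: "\<gamma>d < d" "\<forall>c\<in>C. c < d \<longrightarrow> c < \<gamma>d" by blast
    define S where "S = (\<lambda>c. \<phi> (jf c) d) ` (C \<inter> {..<\<gamma>d})"
    have "S \<subseteq> {..<d}" unfolding S_def using phiP jf Hk dA by blast
    moreover have "S \<lesssim> {..<\<gamma>d}" unfolding S_def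
      by (meson image_lepoll inf_le2 lepoll_trans subset_imp_lepoll)
    ultimately have "\<exists>\<gamma><d. \<forall>x\<in>S. x < \<gamma>" by (rule small_bounded[OF dreg gd(1)])
    then obtain y1 where y1: "y1 < d" "\<forall>x\<in>S. x < y1" by blast
    have "max y1 (V d) < d" using y1(1) Vd[OF dA] by simp
    then obtain y where y: "max y1 (V d) < y" "y < d" using reg_limit[OF dreg] by blast
    have "\<forall>j\<in>J. \<phi> j d < y"
    proof
      fix j assume "j \<in> J"
      then obtain c where c: "c \<in> C" "j = jf c" unfolding J_def by blast
      show "\<phi> j d < y"
      proof (cases "c < d")
        case True
        then have "c < \<gamma>d" using gd c(1) by blast
        then have "\<phi> j d \<in> S" unfolding S_def using c by blast
        then have "\<phi> j d < y1" using y1 by blast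
        moreover have "y1 < y" using y(1) by simp
        ultimately show ?thesis by (rule order.strict_trans)
      next
        case False
        then have "d < c" using c(1) dC by (metis linorder_neqE)
        then have "I d \<le> jf c" "jf c \<in> H" using jf c(1) dA by blast+
        then have "\<phi> j d = V d" using V dA c(2) by blast
        then show ?thesis using y(1) by simp
      qed
    qed
    then show ?thesis using y(2) by blast
  qed
  then obtain yf where yf: "\<forall>d\<in>A. yf d < d \<and> (\<forall>j\<in>J. \<phi> j d < yf d)"
    by (metis (no_types, lifting))
  have "bounded_prod A G"
    unfolding bounded_prod_def
  proof
    show "restrict yf A \<in> prodA A" unfolding prodA_def using yf by (auto simp: PiE_iff)
    show "\<forall>f\<in>G. \<forall>a\<in>A. f a < restrict yf A a" unfolding G_def using yf by auto
  qed
  then show False using nb GF Gk by blast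
qed


theorem theorem4p2:
  fixes \<kappa> :: "'o::wellorder"
  assumes "weakly_compact \<kappa>"
  shows "(\<forall>A. A \<subseteq> {..<\<kappa>} \<and> (\<forall>a\<in>A. regular_cardinal a) \<and> unbounded_in A \<kappa>
              \<and> \<not> stationary A \<kappa> \<longrightarrow> \<not> in_spec A \<kappa>)
       \<and> (\<forall>A. A \<subseteq> {..<\<kappa>} \<and> (\<forall>a\<in>A. regular_cardinal a) \<and> unbounded_in A \<kappa>
              \<longrightarrow> (in_spec A \<kappa> \<longleftrightarrow> stationary A \<kappa>))"
proof -
  have reg: "regular_cardinal \<kappa>" using assms by (rule wc_regular)
  have unc: "uncountable {..<\<kappa>}" using assms unfolding weakly_compact_def by blast
  have p1: "\<forall>A. A \<subseteq> {..<\<kappa>} \<and> (\<forall>a\<in>A. regular_cardinal a) \<and> unbounded_in A \<kappa>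
              \<and> \<not> stationary A \<kappa> \<longrightarrow> \<not> in_spec A \<kappa>"
    using nonstat_nospec[OF assms] by blast
  have p2: "\<forall>A. A \<subseteq> {..<\<kappa>} \<and> (\<forall>a\<in>A. regular_cardinal a) \<and> unbounded_in A \<kappa>
              \<longrightarrow> (in_spec A \<kappa> \<longleftrightarrow> stationary A \<kappa>)"
  proof (intro allI impI)
    fix A assume h: "A \<subseteq> {..<\<kappa>} \<and> (\<forall>a\<in>A. regular_cardinal a) \<and> unbounded_in A \<kappa>"
    show "in_spec A \<kappa> \<longleftrightarrow> stationary A \<kappa>"
      using nonstat_nospec[OF assms] stat_spec[OF reg unc] h by blast
  qed
  show ?thesis using p1 p2 by blast
qed

end
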